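(* Let $n\ge1$, $r\ge1$, let $R,D\subseteq\{1,\dots,n-1\}$ and $\sigma\in S_n$. Then $$(q_r;q_r)_n\sum_{\substack{Z\in(\mathbb{N}^r)^n\\ \sigma_R(Z)=\sigma}} q^Z\,\chi\!\left(\mathrm{Des}_{R,Z^{(2)}}(\sigma)=D\right)=q_r^{c(D)}\sum_{\substack{S\in(\mathbb{N}^{r-1})^n\\ \mathrm{Des}_{R,S}(\sigma)=D}} q^S,$$ where $c(D)=\sum_{i\in D}(n-i)$.
   Context: $\mathbb{N}=\{0,1,\dots\}$; sequences in $\mathbb{N}^r$ are compared lexicographically (first differing coordinate decides). $(q;t)_r=(1-q)(1-qt)\cdots(1-qt^{r-1})$; $\chi(A)$ is $1$ if $A$ holds and $0$ otherwise. For $R\subseteq\{1,\dots,n-1\}$ and distinct $a,b\in\{1,\dots,n\}$, write $a\sim_R b$ if all of $\min(a,b),\dots,\max(a,b)-1$ lie in $R$. For $S=(s^1,\dots,s^n)\in(\mathbb{N}^r)^n$, the reading order on indices: $i$ is read before $j$ if $s^i<s^j$, or if $s^i=s^j$ and either ($i<j$ and not $i\sim_R j$) or ($i>j$ and $i\sim_R j$); $\sigma_R(S)\in S_n$ is the permutation $\sigma_1\cdots\sigma_n$ listing the indices in this reading order. For $Z=(z^1,\dots,z^n)\in(\mathbb{N}^r)^n$ with $z^j=(z^j_1,\dots,z^j_r)$, $q^Z=\prod_{i=1}^r q_{r-i+1}^{z^1_i+\cdots+z^n_i}$, and $Z^{(2)}\in(\mathbb{N}^{r-1})^n$ is obtained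 by deleting the first coordinate of every $z^j$. For $S=(s^1,\dots,s^n)\in(\mathbb{N}^{r'})^n$ (if $r'=0$, all $s^i$ are empty and equal) and $\sigma\in S_n$, $\mathrm{Des}_{R,S}(\sigma)$ is the set of $i\in\{1,\dots,n-1\}$ with either $s^{\sigma_i}>s^{\sigma_{i+1}}$, or $s^{\sigma_i}=s^{\sigma_{i+1}}$ and either ($\sigma_{i+1}<\sigma_i$ and not $\sigma_{i+1}\sim_R\sigma_i$) or ($\sigma_{i+1}>\sigma_i$ and $\sigma_i\sim_R\sigma_{i+1}$). *)

theory Defs
  imports "HOL-Analysis.Analysis" "HOL-Combinatorics.Permutations"
begin

text \<open>Elements of N^r are lists of length r; an n-tuple (s^1,...,s^n) is a
  function S :: nat => nat list, used on the indices 1..n.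
  The variables q_1,...,q_r are q 1, ..., q r.\<close>

definition lex_less :: "nat list \<Rightarrow> nat list \<Rightarrow> bool" where
  "lex_less a b \<longleftrightarrow> (\<exists>k < min (length a) (length b).
      take k a = take k b \<and> a ! k < b ! k)"

definition simR :: "nat set \<Rightarrow> nat \<Rightarrow> nat \<Rightarrow> bool" where
  "simR R a b \<longleftrightarrow> a \<noteq> b \<and> {min a b..<max a b} \<subseteq> R"

definition read_before :: "nat set \<Rightarrow> (nat \<Rightarrow> nat list) \<Rightarrow> nat \<Rightarrow> nat \<Rightarrow> bool" where
  "read_before R S i j \<longleftrightarrow> lex_less (S i) (S j) \<or>
     (S i = S j \<and> ((i < j \<and> \<not> simR R i j) \<or> (i > j \<and> simR R i j)))"

definition sigmaR :: "nat \<Rightarrow> nat set \<Rightarrow> (nat \<Rightarrow> nat list) \<Rightarrow> (nat \<Rightarrow> nat)" where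
  "sigmaR n R S = (THE \<sigma>. \<sigma> permutes {1..n} \<and>
      (\<forall>a b. 1 \<le> a \<and> a < b \<and> b \<le> n \<longrightarrow> read_before R S (\<sigma> a) (\<sigma> b)))"

definition DesRS :: "nat \<Rightarrow> nat set \<Rightarrow> (nat \<Rightarrow> nat list) \<Rightarrow> (nat \<Rightarrow> nat) \<Rightarrow> nat set" where
  "DesRS n R S \<sigma> = {i \<in> {1..n-1}.
      lex_less (S (\<sigma> (i+1))) (S (\<sigma> i)) \<or>
      (S (\<sigma> i) = S (\<sigma> (i+1)) \<and>
        ((\<sigma> (i+1) < \<sigma> i \<and> \<not> simR R (\<sigma> (i+1)) (\<sigma> i)) \<or>
         (\<sigma> (i+1) > \<sigma> i \<and> simR R (\<sigma> i) (\<sigma> (i+1)))))}"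

definition tuples :: "nat \<Rightarrow> nat \<Rightarrow> (nat \<Rightarrow> nat list) set" where
  "tuples n r = {Z. (\<forall>j\<in>{1..n}. length (Z j) = r) \<and> (\<forall>j. j \<notin> {1..n} \<longrightarrow> Z j = [])}"

definition qmon :: "nat \<Rightarrow> nat \<Rightarrow> (nat \<Rightarrow> real) \<Rightarrow> (nat \<Rightarrow> nat list) \<Rightarrow> real" where
  "qmon n r q Z = (\<Prod>i\<in>{1..r}. q (r - i + 1) ^ (\<Sum>j\<in>{1..n}. Z j ! (i - 1)))"

text \<open>Z^(2): delete the first coordinate of every z^j\<close>
definition drop_first :: "(nat \<Rightarrow> nat list) \<Rightarrow> (nat \<Rightarrow> nat list)" where
  "drop_first Z = (\<lambda>j. tl (Z j))"

definition qpoch :: "real \<Rightarrow> real \<Rightarrow> nat \<Rightarrow> real" where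
  "qpoch a t m = (\<Prod>k<m. (1 - a * t ^ k))"

definition cD :: "nat \<Rightarrow> nat set \<Rightarrow> nat" where
  "cD n D = (\<Sum>i\<in>D. n - i)"

end

theory Submission
  imports Defs
begin


definition ltn :: "(nat \<times> nat) set" where "ltn = {(x,y). x < y}"


lemma lex_less_lexord:
  assumes "length a = length b"
  shows "lex_less a b \<longleftrightarrow> (a,b) \<in> lexord ltn"
  using assms unfolding lex_less_def lexord_take_index_conv ltn_def by auto

lemma lex_less_irrefl: "\<not> lex_less a a"
  unfolding lex_less_def by auto

lemma lex_less_trans:
  assumes "length a = length b" "length b = length c" "lex_less a b" "lex_less b c"
  shows "lex_less a c"
proof -
  have "trans ltn" unfolding ltn_def trans_def by auto
  thus ?thesis using assms lexord_trans by (metis lex_less_lexord)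
qed

lemma lex_less_total:
  assumes "length a = length b" "a \<noteq> b"
  shows "lex_less a b \<or> lex_less b a"
proof -
  have "total ltn" unfolding ltn_def total_on_def by auto
  hence "total (lexord ltn)" by (rule total_lexord)
  thus ?thesis using assms lex_less_lexord unfolding total_on_def by (metis UNIV_I)
qed

lemma lex_less_cons:
  "lex_less (a # x) (b # y) \<longleftrightarrow> a < b \<or> (a = b \<and> lex_less x y)"
proof
  assume "lex_less (a # x) (b # y)"
  then obtain k where k: "k < min (length (a#x)) (length (b#y))" "take k (a#x) = take k (b#y)"
    "(a#x) ! k < (b#y) ! k" unfolding lex_less_def by blast
  show "a < b \<or> (a = b \<and> lex_less x y)"
  proof (cases k)
    case 0 thus ?thesis using k by simp
  next
    case (Suc k')
    thus ?thesis using k unfolding lex_less_def by auto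
  qed
next
  assume "a < b \<or> (a = b \<and> lex_less x y)"
  thus "lex_less (a # x) (b # y)"
  proof
    assume "a < b" thus ?thesis unfolding lex_less_def by (rule_tac x=0 in exI) auto
  next
    assume "a = b \<and> lex_less x y"
    then obtain k where "a = b" "k < min (length x) (length y)" "take k x = take k y" "x ! k < y ! k"
      unfolding lex_less_def by blast
    thus ?thesis unfolding lex_less_def by (rule_tac x="Suc k" in exI) auto
  qed
qed

lemma simR_sym: "simR R a b = simR R b a"
  unfolding simR_def by (auto simp: min_def max_def)

lemma simR_split:
  assumes "a < b" "b < c"
  shows "simR R a c \<longleftrightarrow> simR R a b \<and> simR R b c"
proof -
  have "{a..<c} = {a..<b} \<union> {b..<c}" using assms by auto
  thus ?thesis using assms unfolding simR_def by auto
qed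

definition tb :: "nat set \<Rightarrow> nat \<Rightarrow> nat \<Rightarrow> bool" where
  "tb R i j \<longleftrightarrow> (i < j \<and> \<not> simR R i j) \<or> (i > j \<and> simR R i j)"

lemma tb_irrefl: "\<not> tb R i i" unfolding tb_def by auto

lemma tb_total: "i \<noteq> j \<Longrightarrow> tb R i j \<or> tb R j i"
  unfolding tb_def using simR_sym by (metis linorder_neqE_nat)

lemma tb_asym: "tb R i j \<Longrightarrow> \<not> tb R j i"
  unfolding tb_def using simR_sym by (metis less_asym)

lemma tb_trans:
  assumes "tb R i j" "tb R j k"
  shows "tb R i k"
proof -
  have sy: "\<And>a b. simR R a b = simR R b a" by (rule simR_sym)
  consider "i < j" "j < k" | "i < k" "k < j" | "j < i" "i < k" | "j < k" "k < i" | "k < i" "i < j"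
    | "k < j" "j < i" | "i = k" | "i = j" | "j = k" by linarith
  thus ?thesis
  proof cases
    case 1 thus ?thesis using assms simR_split[of i j k R] unfolding tb_def by auto
  next
    case 2 thus ?thesis using assms simR_split[of i k j R] sy[of j k] unfolding tb_def by auto
  next
    case 3 thus ?thesis using assms simR_split[of j i k R] sy[of j i] unfolding tb_def by auto
  next
    case 4 thus ?thesis using assms simR_split[of j k i R] sy[of i k] sy[of i j] unfolding tb_def by auto
  next
    case 5 thus ?thesis using assms simR_split[of k i j R] sy[of i k] sy[of j k] unfolding tb_def by auto
  next
    case 6 thus ?thesis using assms simR_split[of k j i R] sy[of i k] sy[of j k] sy[of i j] unfolding tb_def by auto
  next
    case 7 thus ?thesis using assms tb_asym by blast
  next
    case 8 thus ?thesis using assms tb_irrefl by blast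
  next
    case 9 thus ?thesis using assms tb_irrefl by blast
  qed
qed

lemma read_before_tb: "read_before R S i j \<longleftrightarrow> lex_less (S i) (S j) \<or> (S i = S j \<and> tb R i j)"
  unfolding read_before_def tb_def by auto



definition sortedP :: "(nat \<Rightarrow> nat \<Rightarrow> bool) \<Rightarrow> nat \<Rightarrow> (nat \<Rightarrow> nat) \<Rightarrow> bool" where
  "sortedP P n \<tau> \<longleftrightarrow> (\<forall>a b. 1 \<le> a \<and> a < b \<and> b \<le> n \<longrightarrow> P (\<tau> a) (\<tau> b))"

lemma sorted_unique:
  assumes asym: "\<And>x y. x \<in> {1..n} \<Longrightarrow> y \<in> {1..n} \<Longrightarrow> P x y \<Longrightarrow> \<not> P y x"
    and ps: "\<sigma> permutes {1..n}" and pt: "\<tau> permutes {1..n}"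
    and ss: "sortedP P n \<sigma>" and st: "sortedP P n \<tau>"
  shows "\<tau> = \<sigma>"
proof -
  have "\<tau> a = \<sigma> a" for a
  proof (induction a rule: less_induct)
    case (less a)
    show ?case
    proof (cases "a \<in> {1..n}")
      case False thus ?thesis using ps pt by (simp add: permutes_not_in)
    next
      case aN: True
      show ?thesis
      proof (rule ccontr)
        assume ne: "\<tau> a \<noteq> \<sigma> a"
        have xN: "\<tau> a \<in> {1..n}" using permutes_in_image[OF pt] aN by blast
        have yN: "\<sigma> a \<in> {1..n}" using permutes_in_image[OF ps] aN by blast
        obtain c where c: "c \<in> {1..n}" "\<sigma> c = \<tau> a"
          using ps xN by (metis permutes_inverses(1) permutes_in_image permutes_inv)
        obtain d where d: "d \<in> {1..n}" "\<tau> d = \<sigma> a"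
          using pt yN by (metis permutes_inverses(1) permutes_in_image permutes_inv)
        have "c \<noteq> a" using c ne by auto
        moreover have "\<not> c < a"
        proof
          assume "c < a"
          hence "\<tau> c = \<sigma> c" by (rule less.IH)
          hence "\<tau> c = \<tau> a" using c by simp
          hence "c = a" using pt by (metis permutes_inj injD)
          thus False using \<open>c < a\<close> by simp
        qed
        ultimately have ca: "a < c" by simp
        have "d \<noteq> a" using d ne by auto
        moreover have "\<not> d < a"
        proof
          assume "d < a"
          hence "\<tau> d = \<sigma> d" by (rule less.IH)
          hence "\<sigma> d = \<sigma> a" using d by simp
          hence "d = a" using ps by (metis permutes_inj injD)
          thus False using \<open>d < a\<close> by simp
        qed
        ultimately have da: "a < d" by simp
        have "P (\<sigma> a) (\<sigma> c)" using ss ca aN c unfolding sortedP_def by (metis atLeastAtMost_iff)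
        hence 1: "P (\<sigma> a) (\<tau> a)" using c by simp
        have "P (\<tau> a) (\<tau> d)" using st da aN d unfolding sortedP_def by (metis atLeastAtMost_iff)
        hence 2: "P (\<tau> a) (\<sigma> a)" using d by simp
        show False using asym[OF xN yN 2] 1 by simp
      qed
    qed
  qed
  thus ?thesis by auto
qed

lemma sorted_adjacent:
  assumes trans: "\<And>x y z. x \<in> {1..n} \<Longrightarrow> y \<in> {1..n} \<Longrightarrow> z \<in> {1..n} \<Longrightarrow> P x y \<Longrightarrow> P y z \<Longrightarrow> P x z"
    and ps: "\<sigma> permutes {1..n}"
  shows "sortedP P n \<sigma> \<longleftrightarrow> (\<forall>a. 1 \<le> a \<and> a < n \<longrightarrow> P (\<sigma> a) (\<sigma> (a+1)))"
proof
  assume "sortedP P n \<sigma>" thus "\<forall>a. 1 \<le> a \<and> a < n \<longrightarrow> P (\<sigma> a) (\<sigma> (a+1))"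
    unfolding sortedP_def by auto
next
  assume adj: "\<forall>a. 1 \<le> a \<and> a < n \<longrightarrow> P (\<sigma> a) (\<sigma> (a+1))"
  have inN: "\<And>a. a \<in> {1..n} \<Longrightarrow> \<sigma> a \<in> {1..n}" using permutes_in_image[OF ps] by blast
  have "\<forall>a. 1 \<le> a \<and> a + k + 1 \<le> n \<longrightarrow> P (\<sigma> a) (\<sigma> (a+k+1))" for k
  proof (induction k)
    case 0 thus ?case using adj by auto
  next
    case (Suc k)
    show ?case
    proof (intro allI impI)
      fix a assume a: "1 \<le> a \<and> a + Suc k + 1 \<le> n"
      have 1: "P (\<sigma> a) (\<sigma> (a+k+1))" using Suc a by auto
      have 2: "P (\<sigma> (a+k+1)) (\<sigma> (a+k+1+1))" using adj a by auto
      show "P (\<sigma> a) (\<sigma> (a + Suc k + 1))"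
        using trans[OF inN inN inN 1 2] a by auto
    qed
  qed
  thus "sortedP P n \<sigma>" unfolding sortedP_def
    by (metis add.commute add_Suc less_imp_Suc_add Suc_eq_plus1 add.assoc)
qed

lemma sorted_exists:
  assumes irr: "\<And>x. x \<in> {1..n} \<Longrightarrow> \<not> P x x"
    and trans: "\<And>x y z. x \<in> {1..n} \<Longrightarrow> y \<in> {1..n} \<Longrightarrow> z \<in> {1..n} \<Longrightarrow> P x y \<Longrightarrow> P y z \<Longrightarrow> P x z"
    and total: "\<And>x y. x \<in> {1..n} \<Longrightarrow> y \<in> {1..n} \<Longrightarrow> x \<noteq> y \<Longrightarrow> P x y \<or> P y x"
  shows "\<exists>\<sigma>. \<sigma> permutes {1..n} \<and> sortedP P n \<sigma>"
proof -
  define N where "N = {1..n::nat}"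
  define rk where "rk x = card {y\<in>N. P y x}" for x
  have fN: "finite N" unfolding N_def by simp
  have mono: "rk x < rk y" if "x \<in> N" "y \<in> N" "P x y" for x y
  proof -
    have "{z\<in>N. P z x} \<subset> {z\<in>N. P z y}"
    proof
      show "{z\<in>N. P z x} \<subseteq> {z\<in>N. P z y}" using trans that unfolding N_def by blast
      show "{z\<in>N. P z x} \<noteq> {z\<in>N. P z y}" using irr that unfolding N_def by blast
    qed
    thus ?thesis unfolding rk_def using fN by (simp add: psubset_card_mono)
  qed
  have inj: "inj_on rk N"
  proof (rule inj_onI)
    fix x y assume "x \<in> N" "y \<in> N" "rk x = rk y"
    thus "x = y" using total[of x y] mono[of x y] mono[of y x] unfolding N_def by force
  qed
  have rng: "rk ` N \<subseteq> {0..<n}"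
  proof
    fix r assume "r \<in> rk ` N"
    then obtain x where x: "x \<in> N" "r = rk x" by auto
    have "{y\<in>N. P y x} \<subseteq> N - {x}" using irr x unfolding N_def by auto
    hence "rk x \<le> card (N - {x})" unfolding rk_def using fN by (simp add: card_mono)
    also have "\<dots> < n" using x fN unfolding N_def by simp
    finally show "r \<in> {0..<n}" using x by simp
  qed
  have img: "rk ` N = {0..<n}"
    using card_subset_eq[OF _ rng] card_image[OF inj] unfolding N_def by simp
  have bij1: "bij_betw rk N {0..<n}" using inj img by (simp add: bij_betw_def)
  have bij2: "bij_betw (the_inv_into N rk) {0..<n} N" using bij_betw_the_inv_into[OF bij1] .
  define \<sigma> where "\<sigma> a = (if a \<in> N then the_inv_into N rk (a - 1) else a)" for a
  have bij3: "bij_betw (\<lambda>a. a - 1) N {0..<n}"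
    unfolding N_def by (rule bij_betwI[where g="\<lambda>a. a + 1"]) auto
  have "bij_betw (the_inv_into N rk \<circ> (\<lambda>a. a - 1)) N N" using bij_betw_trans[OF bij3 bij2] .
  hence "bij_betw \<sigma> N N" by (rule bij_betw_cong[THEN iffD1, rotated]) (simp add: \<sigma>_def)
  hence perm: "\<sigma> permutes N" by (rule bij_imp_permutes) (simp add: \<sigma>_def)
  have rks: "rk (\<sigma> a) = a - 1" if "a \<in> N" for a
  proof -
    have "a - 1 \<in> rk ` N" using that img unfolding N_def by auto
    thus ?thesis using that f_the_inv_into_f[OF inj] by (simp add: \<sigma>_def)
  qed
  have "sortedP P n \<sigma>" unfolding sortedP_def
  proof (intro allI impI)
    fix a b assume ab: "1 \<le> a \<and> a < b \<and> b \<le> n"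
    hence aN: "a \<in> N" and bN: "b \<in> N" unfolding N_def by auto
    have sa: "\<sigma> a \<in> N" and sb: "\<sigma> b \<in> N" using perm aN bN by (auto simp: permutes_in_image)
    have "\<sigma> a \<noteq> \<sigma> b" using perm ab by (metis permutes_inj injD less_irrefl)
    moreover have "\<not> P (\<sigma> b) (\<sigma> a)"
    proof
      assume "P (\<sigma> b) (\<sigma> a)"
      hence "rk (\<sigma> b) < rk (\<sigma> a)" using mono sa sb by blast
      hence "b - 1 < a - 1" using rks[OF aN] rks[OF bN] by simp
      thus False using ab by linarith
    qed
    ultimately show "P (\<sigma> a) (\<sigma> b)" using total sa sb unfolding N_def by blast
  qed
  thus ?thesis using perm unfolding N_def by blast
qed



definition eqlen :: "nat \<Rightarrow> nat \<Rightarrow> (nat \<Rightarrow> nat list) \<Rightarrow> bool" where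
  "eqlen n m S \<longleftrightarrow> (\<forall>j\<in>{1..n}. length (S j) = m)"

lemma rb_irrefl: "\<not> read_before R S x x"
  unfolding read_before_tb using lex_less_irrefl tb_irrefl by blast

lemma rb_trans:
  assumes "eqlen n m S" "x \<in> {1..n}" "y \<in> {1..n}" "z \<in> {1..n}"
    "read_before R S x y" "read_before R S y z"
  shows "read_before R S x z"
proof -
  have l: "length (S x) = length (S y)" "length (S y) = length (S z)"
    using assms(1-4) unfolding eqlen_def by auto
  from assms(5) have A: "lex_less (S x) (S y) \<or> (S x = S y \<and> tb R x y)" unfolding read_before_tb .
  from assms(6) have B: "lex_less (S y) (S z) \<or> (S y = S z \<and> tb R y z)" unfolding read_before_tb .
  show ?thesis
  proof (cases "lex_less (S x) (S y)")
    case True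
    show ?thesis
    proof (cases "lex_less (S y) (S z)")
      case True2: True
      show ?thesis using lex_less_trans[OF l True True2] unfolding read_before_tb by simp
    next
      case False
      with B have "S y = S z" by simp
      with True show ?thesis unfolding read_before_tb by simp
    qed
  next
    case False
    with A have e: "S x = S y" "tb R x y" by auto
    show ?thesis
    proof (cases "lex_less (S y) (S z)")
      case True2: True
      show ?thesis using True2 e unfolding read_before_tb by simp
    next
      case False
      with B have "S y = S z" "tb R y z" by auto
      with e show ?thesis using tb_trans unfolding read_before_tb by metis
    qed
  qed
qed

lemma rb_total:
  assumes "eqlen n m S" "x \<in> {1..n}" "y \<in> {1..n}" "x \<noteq> y"
  shows "read_before R S x y \<or> read_before R S y x"
proof -
  have l: "length (S x) = length (S y)" using assms(1-3) unfolding eqlen_def by auto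
  show ?thesis
  proof (cases "S x = S y")
    case True thus ?thesis using tb_total[OF assms(4), of R] unfolding read_before_tb by auto
  next
    case False thus ?thesis using lex_less_total[OF l False] unfolding read_before_tb by blast
  qed
qed

lemma rb_asym:
  assumes "eqlen n m S" "x \<in> {1..n}" "y \<in> {1..n}" "read_before R S x y"
  shows "\<not> read_before R S y x"
  using rb_trans[OF assms(1,2,3,2) assms(4)] rb_irrefl by blast

lemma sigmaR_iff:
  assumes "eqlen n m S" "\<tau> permutes {1..n}"
  shows "sigmaR n R S = \<tau> \<longleftrightarrow> sortedP (read_before R S) n \<tau>"
proof -
  obtain \<sigma>0 where s0: "\<sigma>0 permutes {1..n}" "sortedP (read_before R S) n \<sigma>0"
    using sorted_exists[of n "read_before R S"] rb_irrefl rb_trans[OF assms(1)] rb_total[OF assms(1)]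
    by blast
  have uniq: "\<And>\<tau>. \<tau> permutes {1..n} \<Longrightarrow> sortedP (read_before R S) n \<tau> \<Longrightarrow> \<tau> = \<sigma>0"
    using sorted_unique[OF _ s0(1) _ s0(2)] rb_asym[OF assms(1)] by blast
  have "sigmaR n R S = \<sigma>0"
    unfolding sigmaR_def sortedP_def[symmetric]
  proof (rule the_equality)
    show "\<sigma>0 permutes {1..n} \<and> sortedP (read_before R S) n \<sigma>0" using s0 by blast
  next
    fix \<tau> assume "\<tau> permutes {1..n} \<and> sortedP (read_before R S) n \<tau>"
    thus "\<tau> = \<sigma>0" using uniq by blast
  qed
  thus ?thesis using uniq[OF assms(2)] s0 by auto
qed

lemma rb_cons:
  assumes "x \<in> {1..n}" "y \<in> {1..n}"
  shows "read_before R (\<lambda>j. if j \<in> {1..n} then f j # S j else []) x y \<longleftrightarrow>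
     f x < f y \<or> (f x = f y \<and> read_before R S x y)"
proof -
  have "read_before R (\<lambda>j. if j \<in> {1..n} then f j # S j else []) x y \<longleftrightarrow>
     lex_less (f x # S x) (f y # S y) \<or> (f x # S x = f y # S y \<and> tb R x y)"
    unfolding read_before_tb using assms by simp
  also have "\<dots> \<longleftrightarrow> f x < f y \<or> (f x = f y \<and> read_before R S x y)"
    unfolding lex_less_cons read_before_tb by auto
  finally show ?thesis .
qed

lemma Des_iff:
  assumes "i \<in> {1..n-1}"
  shows "i \<in> DesRS n R S \<sigma> \<longleftrightarrow> read_before R S (\<sigma> (i+1)) (\<sigma> i)"
  using assms simR_sym[of R "\<sigma> i" "\<sigma> (i+1)"] unfolding DesRS_def read_before_def by auto

lemma char_sigma:
  assumes "eqlen n m S" "\<sigma> permutes {1..n}"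
  shows "sigmaR n R (\<lambda>j. if j \<in> {1..n} then f j # S j else []) = \<sigma> \<longleftrightarrow>
    (\<forall>a. 1 \<le> a \<and> a < n \<longrightarrow> f (\<sigma> a) + (if a \<in> DesRS n R S \<sigma> then 1 else 0) \<le> f (\<sigma> (a+1)))"
proof -
  define Z where "Z = (\<lambda>j. if j \<in> {1..n} then f j # S j else [])"
  have eZ: "eqlen n (Suc m) Z" using assms(1) unfolding eqlen_def Z_def by auto
  have inN: "\<And>a. a \<in> {1..n} \<Longrightarrow> \<sigma> a \<in> {1..n}" using permutes_in_image[OF assms(2)] by blast
  have "sigmaR n R Z = \<sigma> \<longleftrightarrow> sortedP (read_before R Z) n \<sigma>" by (rule sigmaR_iff[OF eZ assms(2)])
  also have "\<dots> \<longleftrightarrow> (\<forall>a. 1 \<le> a \<and> a < n \<longrightarrow> read_before R Z (\<sigma> a) (\<sigma> (a+1)))"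
    by (rule sorted_adjacent[OF _ assms(2)]) (rule rb_trans[OF eZ])
  also have "\<dots> \<longleftrightarrow> (\<forall>a. 1 \<le> a \<and> a < n \<longrightarrow> f (\<sigma> a) + (if a \<in> DesRS n R S \<sigma> then 1 else 0) \<le> f (\<sigma> (a+1)))"
  proof (intro all_cong imp_cong refl)
    fix a assume a: "1 \<le> a \<and> a < n"
    have a1: "a \<in> {1..n-1}" using a by auto
    have x: "\<sigma> a \<in> {1..n}" and y: "\<sigma> (a+1) \<in> {1..n}" using inN a by auto
    have ne: "\<sigma> a \<noteq> \<sigma> (a+1)" using assms(2) by (metis permutes_inj injD n_not_Suc_n Suc_eq_plus1)
    have d: "a \<in> DesRS n R S \<sigma> \<longleftrightarrow> \<not> read_before R S (\<sigma> a) (\<sigma> (a+1))"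
      using Des_iff[of a n R S \<sigma>] a1 rb_total[OF assms(1) x y ne] rb_asym[OF assms(1) x y] by auto
    show "read_before R Z (\<sigma> a) (\<sigma> (a+1)) \<longleftrightarrow> f (\<sigma> a) + (if a \<in> DesRS n R S \<sigma> then 1 else 0) \<le> f (\<sigma> (a+1))"
      unfolding Z_def rb_cons[OF x y] d by auto
  qed
  finally show ?thesis unfolding Z_def .
qed



lemma has_sum_times_nonneg:
  fixes f :: "'a \<Rightarrow> real" and g :: "'b \<Rightarrow> real"
  assumes f: "(f has_sum a) A" and g: "(g has_sum b) B"
    and fn: "\<And>x. x \<in> A \<Longrightarrow> f x \<ge> 0" and gn: "\<And>y. y \<in> B \<Longrightarrow> g y \<ge> 0"
  shows "((\<lambda>(x,y). f x * g y) has_sum (a*b)) (A \<times> B)"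
proof -
  have inner: "((\<lambda>y. (\<lambda>(x,y). f x * g y) (x,y)) has_sum (f x * b)) B" if "x \<in> A" for x
    using has_sum_cmult_right[OF g, of "f x"] by simp
  have outer: "((\<lambda>x. f x * b) has_sum a*b) A" by (rule has_sum_cmult_left[OF f])
  have summ: "(\<lambda>(x,y). f x * g y) summable_on Sigma A (\<lambda>_. B)"
    by (rule summable_on_SigmaI[OF inner has_sum_imp_summable[OF outer]])
       (use fn gn in \<open>auto intro: mult_nonneg_nonneg\<close>)
  show ?thesis using has_sum_SigmaI[OF inner outer summ] by simp
qed

lemma has_sum_Pi_nonneg:
  fixes w :: "'i \<Rightarrow> 'b \<Rightarrow> real"
  assumes "finite J"
  shows "(\<forall>j\<in>J. (w j has_sum s j) (L j)) \<longrightarrow> (\<forall>j\<in>J. \<forall>x\<in>L j. w j x \<ge> 0) \<longrightarrow>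
    ((\<lambda>Z. \<Prod>j\<in>J. w j (Z j)) has_sum (\<Prod>j\<in>J. s j)) {Z. (\<forall>j\<in>J. Z j \<in> L j) \<and> (\<forall>j. j \<notin> J \<longrightarrow> Z j = d)}"
  using assms
proof (induction J rule: finite_induct)
  case empty
  have "{Z. (\<forall>j\<in>{}. Z j \<in> L j) \<and> (\<forall>j. j \<notin> {} \<longrightarrow> Z j = d)} = {\<lambda>_. d}" by auto
  thus ?case by (simp add: has_sum_finiteI)
next
  case (insert j J)
  show ?case
  proof (intro impI)
    assume hs: "\<forall>k\<in>insert j J. (w k has_sum s k) (L k)"
      and nn: "\<forall>k\<in>insert j J. \<forall>x\<in>L k. 0 \<le> w k x"
    define P where "P = {Z. (\<forall>k\<in>J. Z k \<in> L k) \<and> (\<forall>k. k \<notin> J \<longrightarrow> Z k = d)}"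
    define P' where "P' = {Z. (\<forall>k\<in>insert j J. Z k \<in> L k) \<and> (\<forall>k. k \<notin> insert j J \<longrightarrow> Z k = d)}"
    have IH: "((\<lambda>Z. \<Prod>k\<in>J. w k (Z k)) has_sum (\<Prod>k\<in>J. s k)) P"
      using insert.IH hs nn unfolding P_def by auto
    have prod: "((\<lambda>(Z,x). (\<Prod>k\<in>J. w k (Z k)) * w j x) has_sum ((\<Prod>k\<in>J. s k) * s j)) (P \<times> L j)"
      by (rule has_sum_times_nonneg[OF IH]) (use hs nn in \<open>auto simp: P_def intro: prod_nonneg\<close>)
    have "((\<lambda>(Z,x). (\<Prod>k\<in>J. w k (Z k)) * w j x) has_sum ((\<Prod>k\<in>J. s k) * s j)) (P \<times> L j)
       \<longleftrightarrow> ((\<lambda>Z. \<Prod>k\<in>insert j J. w k (Z k)) has_sum (\<Prod>k\<in>insert j J. s k)) P'"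
      apply (rule has_sum_reindex_bij_witness[where i="\<lambda>Z. (Z(j:=d), Z j)" and j="\<lambda>(Z,x). Z(j:=x)"])
      using insert.hyps(2) apply (auto simp: P_def P'_def fun_upd_idem)[4]
      subgoal for a
        using insert.hyps by (cases a) (auto simp: P_def mult.commute intro!: prod.cong)
      by (simp add: insert.hyps mult.commute)
    thus "((\<lambda>Z. \<Prod>k\<in>insert j J. w k (Z k)) has_sum (\<Prod>k\<in>insert j J. s k))
       {Z. (\<forall>k\<in>insert j J. Z k \<in> L k) \<and> (\<forall>k. k \<notin> insert j J \<longrightarrow> Z k = d)}"
      using prod unfolding P'_def by simp
  qed
qed

lemma geom_has_sum:
  fixes c :: real
  assumes "0 \<le> c" "c < 1"
  shows "((\<lambda>x::nat. c ^ x) has_sum (1 / (1 - c))) UNIV"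
  by (rule sums_nonneg_imp_has_sum[OF geometric_sums]) (use assms in auto)



definition mk :: "nat \<Rightarrow> (nat \<Rightarrow> nat list) \<Rightarrow> (nat \<Rightarrow> nat) \<Rightarrow> (nat \<Rightarrow> nat list)" where
  "mk n S f = (\<lambda>j. if j \<in> {1..n} then f j # S j else [])"

definition hdf :: "nat \<Rightarrow> (nat \<Rightarrow> nat list) \<Rightarrow> (nat \<Rightarrow> nat)" where
  "hdf n Z = (\<lambda>j. if j \<in> {1..n} then hd (Z j) else 0)"

lemma mk_in: "S \<in> tuples n m \<Longrightarrow> mk n S f \<in> tuples n (Suc m)"
  unfolding tuples_def mk_def by auto

lemma mk_drop: "S \<in> tuples n m \<Longrightarrow> drop_first (mk n S f) = S"
  unfolding tuples_def mk_def drop_first_def by auto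

lemma mk_hd: "(\<forall>j. j \<notin> {1..n} \<longrightarrow> f j = 0) \<Longrightarrow> hdf n (mk n S f) = f"
  unfolding hdf_def mk_def by auto

lemma mk_inv: "Z \<in> tuples n (Suc m) \<Longrightarrow> mk n (drop_first Z) (hdf n Z) = Z"
proof
  fix j assume Z: "Z \<in> tuples n (Suc m)"
  show "mk n (drop_first Z) (hdf n Z) j = Z j"
  proof (cases "j \<in> {1..n}")
    case True
    hence "length (Z j) = Suc m" using Z unfolding tuples_def by auto
    hence "Z j \<noteq> []" by auto
    thus ?thesis using True unfolding mk_def hdf_def drop_first_def by simp
  next
    case False thus ?thesis using Z unfolding mk_def tuples_def by auto
  qed
qed

lemma drop_in: "Z \<in> tuples n (Suc m) \<Longrightarrow> drop_first Z \<in> tuples n m"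
  unfolding tuples_def drop_first_def by auto

lemma hdf_out: "\<forall>j. j \<notin> {1..n} \<longrightarrow> hdf n Z j = 0"
  unfolding hdf_def by auto

lemma qmon_cons:
  "qmon n (Suc m) q (mk n S f) = q (Suc m) ^ (\<Sum>j\<in>{1..n}. f j) * qmon n m q S"
proof -
  have "{1..Suc m} = insert 1 {Suc 1..Suc m}" by auto
  hence "qmon n (Suc m) q (mk n S f) =
     q (Suc m) ^ (\<Sum>j\<in>{1..n}. mk n S f j ! 0) *
     (\<Prod>i\<in>{Suc 1..Suc m}. q (Suc m - i + 1) ^ (\<Sum>j\<in>{1..n}. mk n S f j ! (i - 1)))"
    unfolding qmon_def by simp
  also have "(\<Sum>j\<in>{1..n}. mk n S f j ! 0) = (\<Sum>j\<in>{1..n}. f j)"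
    by (rule sum.cong) (auto simp: mk_def)
  also have "(\<Prod>i\<in>{Suc 1..Suc m}. q (Suc m - i + 1) ^ (\<Sum>j\<in>{1..n}. mk n S f j ! (i - 1)))
     = (\<Prod>i\<in>{1..m}. q (Suc m - Suc i + 1) ^ (\<Sum>j\<in>{1..n}. mk n S f j ! (Suc i - 1)))"
    by (rule prod.shift_bounds_cl_Suc_ivl)
  also have "\<dots> = qmon n m q S"
    unfolding qmon_def
  proof (rule prod.cong[OF refl])
    fix i assume i: "i \<in> {1..m}"
    have "(\<Sum>j\<in>{1..n}. mk n S f j ! (Suc i - 1)) = (\<Sum>j\<in>{1..n}. S j ! (i - 1))"
      by (rule sum.cong) (use i in \<open>auto simp: mk_def nth_Cons'\<close>)
    thus "q (Suc m - Suc i + 1) ^ (\<Sum>j\<in>{1..n}. mk n S f j ! (Suc i - 1)) = q (m - i + 1) ^ (\<Sum>j\<in>{1..n}. S j ! (i - 1))"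
      by simp
  qed
  finally show ?thesis .
qed

lemma qmon_nonneg:
  assumes "\<forall>i\<in>{1..m}. 0 \<le> q i"
  shows "0 \<le> qmon n m q S"
  unfolding qmon_def by (rule prod_nonneg) (use assms in auto)

lemma tuples_0: "tuples n 0 = {\<lambda>_. []}"
proof (rule set_eqI)
  fix Z :: "nat \<Rightarrow> nat list"
  show "Z \<in> tuples n 0 \<longleftrightarrow> Z \<in> {\<lambda>_. []}"
    unfolding tuples_def by (simp add: fun_eq_iff) (metis atLeastAtMost_iff length_0_conv)
qed

lemma pow_sum_has_sum:
  fixes c :: real and n :: nat
  assumes "0 \<le> c" "c < 1"
  shows "((\<lambda>f. c ^ (\<Sum>j\<in>{1..n}. f j)) has_sum (\<Prod>j\<in>{1..n}. 1 / (1 - c)))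
          {f. (\<forall>j\<in>{1..n}. f j \<in> UNIV) \<and> (\<forall>j. j \<notin> {1..n} \<longrightarrow> f j = 0)}"
proof -
  have "((\<lambda>Z. \<Prod>j\<in>{1..n}. c ^ Z j) has_sum (\<Prod>j\<in>{1..n}. 1 / (1 - c)))
          {f. (\<forall>j\<in>{1..n}. f j \<in> UNIV) \<and> (\<forall>j. j \<notin> {1..n} \<longrightarrow> f j = 0)}"
  using has_sum_Pi_nonneg[where J="{1..n}" and w="\<lambda>_ x. c ^ x" and s="\<lambda>_. 1/(1-c)" and L="\<lambda>_. UNIV" and d=0, OF finite_atLeastAtMost]
    geom_has_sum[OF assms] assms by simp
  thus ?thesis by (simp add: power_sum)
qed

lemma qmon_has_sum:
  assumes "\<forall>i\<in>{1..m}. 0 \<le> q i \<and> q i < 1"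
  shows "qmon n m q summable_on tuples n m"
  using assms
proof (induction m)
  case 0
  show ?case unfolding tuples_0 by simp
next
  case (Suc m)
  define F where "F = {f::nat\<Rightarrow>nat. (\<forall>j\<in>{1..n}. f j \<in> UNIV) \<and> (\<forall>j. j \<notin> {1..n} \<longrightarrow> f j = 0)}"
  have q: "0 \<le> q (Suc m)" "q (Suc m) < 1" using Suc.prems by auto
  have A: "(qmon n m q has_sum (infsum (qmon n m q) (tuples n m))) (tuples n m)"
    using Suc by (auto intro!: has_sum_infsum)
  have B: "((\<lambda>f. q (Suc m) ^ (\<Sum>j\<in>{1..n}. f j)) has_sum (\<Prod>j\<in>{1..n}. 1 / (1 - q (Suc m)))) F"
    unfolding F_def by (rule pow_sum_has_sum[OF q])
  have C: "((\<lambda>(S,f). qmon n m q S * q (Suc m) ^ (\<Sum>j\<in>{1..n}. f j)) has_sum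
     (infsum (qmon n m q) (tuples n m) * (\<Prod>j\<in>{1..n}. 1 / (1 - q (Suc m))))) (tuples n m \<times> F)"
    by (rule has_sum_times_nonneg[OF A B]) (use Suc.prems q in \<open>auto intro: qmon_nonneg\<close>)
  have "((\<lambda>(S,f). qmon n m q S * q (Suc m) ^ (\<Sum>j\<in>{1..n}. f j)) has_sum
     (infsum (qmon n m q) (tuples n m) * (\<Prod>j\<in>{1..n}. 1 / (1 - q (Suc m))))) (tuples n m \<times> F)
    \<longleftrightarrow> (qmon n (Suc m) q has_sum (infsum (qmon n m q) (tuples n m) * (\<Prod>j\<in>{1..n}. 1 / (1 - q (Suc m))))) (tuples n (Suc m))"
    apply (rule has_sum_reindex_bij_witness[where j="\<lambda>(S,f). mk n S f" and i="\<lambda>Z. (drop_first Z, hdf n Z)"])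
    apply (auto simp: F_def mk_drop mk_hd mk_in mk_inv drop_in hdf_out qmon_cons)
    done
  thus ?case using C by (auto simp: summable_on_def)
qed



lemma sum_tri: "(\<Sum>a\<in>{1..n}. \<Sum>k<a. h k) = (\<Sum>k<n. (n - k) * (h k :: nat))"
proof (induction n)
  case 0 thus ?case by simp
next
  case (Suc n)
  have "(\<Sum>a\<in>{1..Suc n}. \<Sum>k<a. h k) = (\<Sum>a\<in>{1..n}. \<Sum>k<a. h k) + (\<Sum>k<Suc n. h k)"
    by simp
  also have "\<dots> = (\<Sum>k<n. (n - k) * h k) + (\<Sum>k<n. h k) + h n" using Suc by simp
  also have "\<dots> = (\<Sum>k<n. (Suc n - k) * h k) + h n"
    by (simp add: sum.distrib[symmetric] Suc_diff_le algebra_simps)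
  also have "\<dots> = (\<Sum>k<Suc n. (Suc n - k) * h k)" by simp
  finally show ?case .
qed

definition FD :: "nat \<Rightarrow> (nat \<Rightarrow> nat) \<Rightarrow> nat set \<Rightarrow> (nat \<Rightarrow> nat) set" where
  "FD n \<sigma> D = {f. (\<forall>j. j \<notin> {1..n} \<longrightarrow> f j = 0) \<and>
     (\<forall>a. 1 \<le> a \<and> a < n \<longrightarrow> f (\<sigma> a) + (if a \<in> D then 1 else 0) \<le> f (\<sigma> (a+1)))}"

lemma FD_has_sum:
  fixes c :: real
  assumes c: "0 \<le> c" "c < 1" and ps: "\<sigma> permutes {1..n}" and D: "D \<subseteq> {1..n-1}"
  shows "((\<lambda>f. c ^ (\<Sum>j\<in>{1..n}. f j)) has_sum (c ^ cD n D * (\<Prod>k<n. 1 / (1 - c ^ (n - k))))) (FD n \<sigma> D)"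
proof -
  define N where "N = {1..n}"
  define \<delta> where "\<delta> k = (if k \<in> D then 1 else 0::nat)" for k
  define E where "E = {e::nat\<Rightarrow>nat. (\<forall>k\<in>{..<n}. e k \<in> UNIV) \<and> (\<forall>k. k \<notin> {..<n} \<longrightarrow> e k = 0)}"
  define g where "g e a = (\<Sum>k<a. e k + \<delta> k)" for e :: "nat \<Rightarrow> nat" and a
  define \<phi> where "\<phi> e = (\<lambda>j. if j \<in> N then g e (inv \<sigma> j) else 0)" for e
  define \<psi> where "\<psi> f = (\<lambda>k. if k < n then f (\<sigma> (k+1)) - f (\<sigma> k) - \<delta> k else 0)" for f :: "nat \<Rightarrow> nat"
  have \<sigma>0: "\<sigma> 0 = 0" using ps by (simp add: permutes_not_in)
  have \<delta>0: "\<delta> 0 = 0" using D unfolding \<delta>_def by auto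
  have inN: "\<And>a. a \<in> N \<Longrightarrow> \<sigma> a \<in> N" using permutes_in_image[OF ps] unfolding N_def by blast
  have invs: "\<And>a. inv \<sigma> (\<sigma> a) = a" using permutes_inverses(2)[OF ps] .
  have \<phi>\<sigma>: "\<phi> e (\<sigma> k) = g e k" if "k \<le> n" for e k
  proof (cases "k = 0")
    case True thus ?thesis using \<sigma>0 unfolding \<phi>_def g_def N_def by simp
  next
    case False
    hence "k \<in> N" using that unfolding N_def by auto
    thus ?thesis using inN invs unfolding \<phi>_def by simp
  qed
  have gl: "c ^ (n - k) < 1" if "k < n" for k
  proof -
    have "c ^ (n - k) \<le> c ^ 1" by (rule power_decreasing) (use that c in auto)
    thus ?thesis using c by simp
  qed
  have H1: "((\<lambda>e. \<Prod>k\<in>{..<n}. (c ^ (n - k)) ^ (e k)) has_sum (\<Prod>k\<in>{..<n}. 1 / (1 - c ^ (n - k)))) E"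
    using has_sum_Pi_nonneg[where J="{..<n}" and w="\<lambda>k x. (c ^ (n - k)) ^ x" and s="\<lambda>k. 1 / (1 - c ^ (n - k))"
        and L="\<lambda>_. UNIV" and d=0, OF finite_lessThan] geom_has_sum gl c
    unfolding E_def by simp
  have H2: "((\<lambda>e. c ^ cD n D * (\<Prod>k\<in>{..<n}. (c ^ (n - k)) ^ (e k))) has_sum
      (c ^ cD n D * (\<Prod>k\<in>{..<n}. 1 / (1 - c ^ (n - k))))) E"
    by (rule has_sum_cmult_right[OF H1])
  have cDeq: "(\<Sum>k<n. (n - k) * \<delta> k) = cD n D"
  proof -
    have "(\<Sum>k<n. (n - k) * \<delta> k) = (\<Sum>k\<in>{..<n}. if k \<in> D then n - k else 0)"
      unfolding \<delta>_def by (rule sum.cong) auto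
    also have "\<dots> = (\<Sum>k\<in>{..<n} \<inter> D. n - k)" by (rule sum.inter_restrict[symmetric]) simp
    also have "{..<n} \<inter> D = D" using D by fastforce
    finally show ?thesis unfolding cD_def by simp
  qed
  have weight: "c ^ (\<Sum>j\<in>{1..n}. \<phi> e j) = c ^ cD n D * (\<Prod>k\<in>{..<n}. (c ^ (n - k)) ^ (e k))" for e
  proof -
    have "(\<Sum>j\<in>{1..n}. \<phi> e j) = (\<Sum>a\<in>{1..n}. \<phi> e (\<sigma> a))"
      using sum.permute[OF ps, of "\<phi> e"] by simp
    also have "\<dots> = (\<Sum>a\<in>{1..n}. g e a)" by (rule sum.cong) (auto simp: \<phi>\<sigma>)
    also have "\<dots> = (\<Sum>k<n. (n - k) * (e k + \<delta> k))" unfolding g_def by (rule sum_tri)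
    also have "\<dots> = (\<Sum>k<n. (n - k) * e k) + cD n D"
      unfolding cDeq[symmetric] sum.distrib[symmetric] by (rule sum.cong) (simp_all add: add_mult_distrib2)
    finally have "(\<Sum>j\<in>{1..n}. \<phi> e j) = (\<Sum>k<n. (n - k) * e k) + cD n D" .
    moreover have "c ^ (\<Sum>k<n. (n - k) * e k) = (\<Prod>k\<in>{..<n}. (c ^ (n - k)) ^ (e k))"
      by (simp add: power_sum power_mult)
    ultimately show ?thesis by (simp add: power_add mult.commute)
  qed
  have "((\<lambda>e. c ^ cD n D * (\<Prod>k\<in>{..<n}. (c ^ (n - k)) ^ (e k))) has_sum
      (c ^ cD n D * (\<Prod>k\<in>{..<n}. 1 / (1 - c ^ (n - k))))) E \<longleftrightarrow>
     ((\<lambda>f. c ^ (\<Sum>j\<in>{1..n}. f j)) has_sum (c ^ cD n D * (\<Prod>k<n. 1 / (1 - c ^ (n - k))))) (FD n \<sigma> D)"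
  proof (rule has_sum_reindex_bij_witness[where j=\<phi> and i=\<psi>])
    fix e assume e: "e \<in> E"
    show "\<psi> (\<phi> e) = e"
    proof
      fix k show "\<psi> (\<phi> e) k = e k"
      proof (cases "k < n")
        case True
        have "\<phi> e (\<sigma> (k+1)) = g e (k+1)" using True by (intro \<phi>\<sigma>) simp
        moreover have "\<phi> e (\<sigma> k) = g e k" using True by (intro \<phi>\<sigma>) simp
        ultimately show ?thesis using True unfolding \<psi>_def g_def by simp
      next
        case False thus ?thesis using e unfolding \<psi>_def E_def by simp
      qed
    qed
    show "\<phi> e \<in> FD n \<sigma> D"
      unfolding FD_def
    proof (intro CollectI conjI allI impI)
      fix j assume "j \<notin> {1..n}" thus "\<phi> e j = 0" unfolding \<phi>_def N_def by (simp only: if_False)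
    next
      fix a assume a: "1 \<le> a \<and> a < n"
      have "\<phi> e (\<sigma> (a+1)) = g e (a+1)" using a by (intro \<phi>\<sigma>) simp
      moreover have "\<phi> e (\<sigma> a) = g e a" using a by (intro \<phi>\<sigma>) simp
      ultimately show "\<phi> e (\<sigma> a) + (if a \<in> D then 1 else 0) \<le> \<phi> e (\<sigma> (a+1))"
        unfolding g_def \<delta>_def by simp
    qed
    show "c ^ (\<Sum>j\<in>{1..n}. \<phi> e j) = c ^ cD n D * (\<Prod>k\<in>{..<n}. (c ^ (n - k)) ^ (e k))"
      by (rule weight)
  next
    fix f assume f: "f \<in> FD n \<sigma> D"
    show "\<psi> f \<in> E" unfolding E_def \<psi>_def by simp
    have f0: "f 0 = 0" using f unfolding FD_def by simp
    have step: "f (\<sigma> a) + \<delta> a \<le> f (\<sigma> (a+1))" if "a < n" for a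
    proof (cases "a = 0")
      case True thus ?thesis using \<sigma>0 f0 \<delta>0 by simp
    next
      case False thus ?thesis using f that unfolding FD_def \<delta>_def by auto
    qed
    have gf: "g (\<psi> f) a = f (\<sigma> a)" if "a \<le> n" for a
      using that
    proof (induction a)
      case 0 thus ?case using \<sigma>0 f0 unfolding g_def by simp
    next
      case (Suc a)
      have "g (\<psi> f) (Suc a) = g (\<psi> f) a + \<psi> f a + \<delta> a" unfolding g_def by simp
      also have "\<dots> = f (\<sigma> a) + (f (\<sigma> (a+1)) - f (\<sigma> a) - \<delta> a) + \<delta> a"
        using Suc unfolding \<psi>_def by simp
      also have "\<dots> = f (\<sigma> (Suc a))" using step[of a] Suc by simp
      finally show ?case .
    qed
    show "\<phi> (\<psi> f) = f"
    proof
      fix j show "\<phi> (\<psi> f) j = f j"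
      proof (cases "j \<in> N")
        case True
        have iN: "inv \<sigma> j \<in> N" using permutes_in_image[OF permutes_inv[OF ps]] True unfolding N_def by blast
        hence "g (\<psi> f) (inv \<sigma> j) = f (\<sigma> (inv \<sigma> j))" by (intro gf) (simp add: N_def)
        also have "\<sigma> (inv \<sigma> j) = j" using permutes_inverses(1)[OF ps] by simp
        finally show ?thesis using True unfolding \<phi>_def by simp
      next
        case False
        hence j: "j \<notin> {1..n}" unfolding N_def .
        have "\<phi> (\<psi> f) j = 0" unfolding \<phi>_def using False by (simp only: if_False)
        moreover have "f j = 0" using f j unfolding FD_def by blast
        ultimately show ?thesis by simp
      qed
    qed
  qed simp
  with H2 show ?thesis by simp
qed



theorem proposition4:
  fixes n r :: nat and R D :: "nat set" and \<sigma> :: "nat \<Rightarrow> nat" and q :: "nat \<Rightarrow> real"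
  assumes "n \<ge> 1" and "r \<ge> 1"
    and "R \<subseteq> {1..n-1}" and "D \<subseteq> {1..n-1}"
    and "\<sigma> permutes {1..n}"
    and "\<forall>i\<in>{1..r}. 0 \<le> q i \<and> q i < 1"
  shows "(\<lambda>Z. qmon n r q Z * (if DesRS n R (drop_first Z) \<sigma> = D then 1 else 0))
            summable_on {Z \<in> tuples n r. sigmaR n R Z = \<sigma>}
       \<and> (\<lambda>S. qmon n (r - 1) q S) summable_on {S \<in> tuples n (r - 1). DesRS n R S \<sigma> = D}
       \<and> qpoch (q r) (q r) n *
           (\<Sum>\<^sub>\<infinity>Z\<in>{Z \<in> tuples n r. sigmaR n R Z = \<sigma>}.
              qmon n r q Z * (if DesRS n R (drop_first Z) \<sigma> = D then 1 else 0))
         = q r ^ cD n D * (\<Sum>\<^sub>\<infinity>S\<in>{S \<in> tuples n (r - 1). DesRS n R S \<sigma> = D}. qmon n (r - 1) q S)"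
proof -
  obtain m where r: "r = Suc m" using assms(2) by (cases r) auto
  define c where "c = q r"
  have c: "0 \<le> c" "c < 1" using assms(2,6) unfolding c_def by auto
  have ps: "\<sigma> permutes {1..n}" by (rule assms(5))
  define A where "A = {Z \<in> tuples n r. sigmaR n R Z = \<sigma>}"
  define AD where "AD = {Z \<in> tuples n r. sigmaR n R Z = \<sigma> \<and> DesRS n R (drop_first Z) \<sigma> = D}"
  define BD where "BD = {S \<in> tuples n m. DesRS n R S \<sigma> = D}"
  define P where "P = (\<Prod>k<n. 1 / (1 - c ^ (n - k)))"
  have qs: "\<forall>i\<in>{1..m}. 0 \<le> q i \<and> q i < 1" using assms(6) r by auto
  have sB: "qmon n m q summable_on BD"
    by (rule summable_on_subset[OF qmon_has_sum[OF qs]]) (auto simp: BD_def)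
  define sb where "sb = infsum (qmon n m q) BD"
  have HB: "(qmon n m q has_sum sb) BD" unfolding sb_def using sB by (rule has_sum_infsum)
  have HF: "((\<lambda>f. c ^ (\<Sum>j\<in>{1..n}. f j)) has_sum (c ^ cD n D * P)) (FD n \<sigma> D)"
    unfolding P_def by (rule FD_has_sum[OF c ps assms(4)])
  have HP: "((\<lambda>(S,f). qmon n m q S * c ^ (\<Sum>j\<in>{1..n}. f j)) has_sum (sb * (c ^ cD n D * P))) (BD \<times> FD n \<sigma> D)"
    by (rule has_sum_times_nonneg[OF HB HF]) (use qs c in \<open>auto intro: qmon_nonneg\<close>)
  have eqS: "\<And>S. S \<in> tuples n m \<Longrightarrow> eqlen n m S" unfolding tuples_def eqlen_def by auto
  have "((\<lambda>(S,f). qmon n m q S * c ^ (\<Sum>j\<in>{1..n}. f j)) has_sum (sb * (c ^ cD n D * P))) (BD \<times> FD n \<sigma> D)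
     \<longleftrightarrow> (qmon n r q has_sum (sb * (c ^ cD n D * P))) AD"
  proof (rule has_sum_reindex_bij_witness[where j="\<lambda>(S,f). mk n S f" and i="\<lambda>Z. (drop_first Z, hdf n Z)"])
    fix a assume a: "a \<in> BD \<times> FD n \<sigma> D"
    obtain S f where Sf: "a = (S, f)" by (cases a)
    have S: "S \<in> tuples n m" "DesRS n R S \<sigma> = D" using a Sf unfolding BD_def by auto
    have f: "f \<in> FD n \<sigma> D" using a Sf by auto
    have fo: "\<forall>j. j \<notin> {1..n} \<longrightarrow> f j = 0" using f unfolding FD_def by auto
    show "(drop_first ((\<lambda>(S,f). mk n S f) a), hdf n ((\<lambda>(S,f). mk n S f) a)) = a"
      using Sf S mk_drop mk_hd[OF fo] by simp
    have sig: "sigmaR n R (mk n S f) = \<sigma>"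
      unfolding mk_def char_sigma[OF eqS[OF S(1)] ps] S(2) using f unfolding FD_def by blast
    show "(\<lambda>(S,f). mk n S f) a \<in> AD"
      using Sf S sig mk_in[OF S(1)] mk_drop[OF S(1)] unfolding AD_def r by simp
    show "qmon n r q ((\<lambda>(S,f). mk n S f) a) = (\<lambda>(S,f). qmon n m q S * c ^ (\<Sum>j\<in>{1..n}. f j)) a"
      using Sf qmon_cons unfolding r c_def by (simp add: mult.commute)
  next
    fix Z assume Z: "Z \<in> AD"
    have Zt: "Z \<in> tuples n (Suc m)" and Zs: "sigmaR n R Z = \<sigma>" and Zd: "DesRS n R (drop_first Z) \<sigma> = D"
      using Z unfolding AD_def r by auto
    show "(\<lambda>(S,f). mk n S f) (drop_first Z, hdf n Z) = Z" using mk_inv[OF Zt] by simp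
    have dt: "drop_first Z \<in> tuples n m" by (rule drop_in[OF Zt])
    have "sigmaR n R (mk n (drop_first Z) (hdf n Z)) = \<sigma>" using mk_inv[OF Zt] Zs by simp
    hence "\<forall>a. 1 \<le> a \<and> a < n \<longrightarrow> hdf n Z (\<sigma> a) + (if a \<in> D then 1 else 0) \<le> hdf n Z (\<sigma> (a+1))"
      unfolding mk_def char_sigma[OF eqS[OF dt] ps] Zd .
    hence "hdf n Z \<in> FD n \<sigma> D" unfolding FD_def using hdf_out by blast
    thus "(drop_first Z, hdf n Z) \<in> BD \<times> FD n \<sigma> D" using dt Zd unfolding BD_def by simp
  qed simp
  with HP have HA: "(qmon n r q has_sum (sb * (c ^ cD n D * P))) AD" by simp
  have "((\<lambda>Z. qmon n r q Z * (if DesRS n R (drop_first Z) \<sigma> = D then 1 else 0)) has_sum (sb * (c ^ cD n D * P))) A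
     \<longleftrightarrow> (qmon n r q has_sum (sb * (c ^ cD n D * P))) AD"
    by (rule has_sum_cong_neutral) (auto simp: A_def AD_def)
  with HA have HL: "((\<lambda>Z. qmon n r q Z * (if DesRS n R (drop_first Z) \<sigma> = D then 1 else 0)) has_sum (sb * (c ^ cD n D * P))) A"
    by simp
  have pos: "0 < 1 - c ^ Suc k" for k
  proof -
    have "c ^ Suc k \<le> c ^ 1" by (rule power_decreasing) (use c in auto)
    thus ?thesis using c by simp
  qed
  have "(\<Prod>k<n. (1 - c ^ (n - k))) = (\<Prod>k<n. (1 - c ^ Suc k))"
    by (rule prod.reindex_bij_witness[where i="\<lambda>k. n - Suc k" and j="\<lambda>k. n - Suc k"])
       (auto, metis Suc_diff_Suc power_Suc)
  hence PP: "P = 1 / (\<Prod>k<n. (1 - c ^ Suc k))" unfolding P_def by (simp add: prod_dividef)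
  have qp: "qpoch c c n = (\<Prod>k<n. (1 - c ^ Suc k))" unfolding qpoch_def by simp
  have nz: "(\<Prod>k<n. (1 - c ^ Suc k)) \<noteq> 0" using pos by (simp add: prod_zero_iff) (metis less_irrefl)
  have key: "qpoch c c n * P = 1" using nz unfolding PP qp by simp
  have "qpoch c c n * (sb * (c ^ cD n D * P)) = c ^ cD n D * sb" using key
    by (metis (no_types, lifting) mult.assoc mult.commute mult.left_neutral)
  moreover have "infsum (\<lambda>Z. qmon n r q Z * (if DesRS n R (drop_first Z) \<sigma> = D then 1 else 0)) A = sb * (c ^ cD n D * P)"
    using HL by (rule infsumI)
  ultimately have eq: "qpoch c c n * infsum (\<lambda>Z. qmon n r q Z * (if DesRS n R (drop_first Z) \<sigma> = D then 1 else 0)) A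
     = c ^ cD n D * infsum (qmon n m q) BD" unfolding sb_def by simp
  have s1: "(\<lambda>Z. qmon n r q Z * (if DesRS n R (drop_first Z) \<sigma> = D then 1 else 0)) summable_on A"
    using HL by (auto simp: summable_on_def)
  show ?thesis using s1 sB eq unfolding A_def BD_def c_def r by simp
qed

end
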